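(* Assume $k\ge 2$, $\epsilon\in(0,1)$, $\delta\in(0,1)$, and $B\ge 108\,\frac{k}{\epsilon^3}\log k$. Let $\gamma=\frac{\epsilon^2}{36\log k}$. Run the pre-processing algorithm with per-color budget $B'=1/\gamma$ (assumed to be an integer), obtaining $T$; let $\tilde C=\{c\in C: f_c(T)<\mathrm{OPT}\}$ and $\tilde f_c(A)=f_c(A\cup T)$ for $c\in\tilde C$; then run Algorithm 2 with failure parameter $\delta$ on the functions $(\tilde f_c)_{c\in\tilde C}$ with budget $\tilde B=B-|T|$, obtaining $\tilde S$ (take $\tilde S=\emptyset$ if $\tilde C=\emptyset$). Then with probability at least $1-\delta$, \[ \min_{c\in C} f_c(T\cup\tilde S)\;\ge\;\left(1-\frac1e-\epsilon\right)\mathrm{OPT}, \] and $|T\cup\tilde S|\le B$.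
   Context: Setup: $V$ is a finite nonempty ground set, $C$ is a finite nonempty set of "colors", $k=|C|$. For each $c\in C$, $f_c\colon 2^V\to\mathbb{R}_{\ge 0}$ is monotone and submodular. $B$ is a positive integer (the budget). $f(T\mid S)=f(S\cup T)-f(S)$ and $f(v\mid S)=f(\{v\}\mid S)$. $\mathrm{OPT}=\max_{S\subseteq V,\,|S|\le B}\min_{c\in C} f_c(S)$. $\Delta_V$ is the probability simplex over $V$; $\log$ is the natural logarithm. Pre-processing algorithm (input: the $f_c$ and a per-color budget $B'$): set $T=\emptyset$; for each color $c\in C$, repeat $B'$ times: pick $v\in\arg\max_{v\in V} f_c(v\mid T)$ and set $T=T\cup\{v\}$. Output $T$. For a family of monotone submodular functions $(g_c)_{c\in D}$ on $V$ and budget $b$, $\mathrm{LP}(S)$ is: maximize $\xi$ subject to $\sum_{v\in V} x_v\,(b\, g_c(v\mid S)+g_c(S))\ge \xi$ for all $c\in D$, $x\in\Delta_V$. Algorithm 2 (input: $(g_c)_{c\in D}$, $b$, $\delta$): set $S_{\mathrm{best}}=\emptyset$; repeat, with independent randomness, $\lceil\log_2(2/\delta)\rceil$ times: $S^{(0)}=\emptyset$; for $i=1,\dots,b$: let $x^{(i)}$ be an optimal solution of $\mathrm{LP}(S^{(i-1)})$, sample $v^{(i)}\sim x^{(i)}$, $S^{(i)}=S^{(i-1)}\cup\{v^{(i)}\}$; if $\min_c g_c(S^{(b)})\ge\min_c g_c(S_{\mathrm{best}})$ set $S_{\mathrm{best}}=S^{(b)}$. Output $S_{\mathrm{best}}$.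 *)

theory Defs
  imports "HOL-Probability.Probability"
begin

definition marg :: "('v set \<Rightarrow> real) \<Rightarrow> 'v set \<Rightarrow> 'v set \<Rightarrow> real" where
  "marg h T S = h (S \<union> T) - h S"

definition mono_submod :: "'v set \<Rightarrow> ('v set \<Rightarrow> real) \<Rightarrow> bool" where
  "mono_submod V h \<longleftrightarrow>
     (\<forall>A. A \<subseteq> V \<longrightarrow> 0 \<le> h A) \<and>
     (\<forall>A B. A \<subseteq> B \<and> B \<subseteq> V \<longrightarrow> h A \<le> h B) \<and>
     (\<forall>A B. A \<subseteq> V \<and> B \<subseteq> V \<longrightarrow> h (A \<union> B) + h (A \<inter> B) \<le> h A + h B)"

definition OPT :: "'v set \<Rightarrow> 'c set \<Rightarrow> ('c \<Rightarrow> 'v set \<Rightarrow> real) \<Rightarrow> nat \<Rightarrow> real" where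
  "OPT V C f B = Max {Min ((\<lambda>c. f c S) ` C) | S. S \<subseteq> V \<and> card S \<le> B}"

definition greedy_choice :: "'v set \<Rightarrow> ('v set \<Rightarrow> real) \<Rightarrow> 'v set \<Rightarrow> 'v \<Rightarrow> bool" where
  "greedy_choice V h T v \<longleftrightarrow> v \<in> V \<and> (\<forall>u\<in>V. marg h {u} T \<le> marg h {v} T)"

(* B' greedy steps for a single colour c, using the tie-breaking selector sel *)
primrec greedy_color :: "('c \<Rightarrow> 'v set \<Rightarrow> 'v) \<Rightarrow> 'c \<Rightarrow> nat \<Rightarrow> 'v set \<Rightarrow> 'v set" where
  "greedy_color sel c 0 T = T"
| "greedy_color sel c (Suc n) T = (let T' = greedy_color sel c n T in insert (sel c T') T')"

definition preprocess :: "('c \<Rightarrow> 'v set \<Rightarrow> 'v) \<Rightarrow> 'c list \<Rightarrow> nat \<Rightarrow> 'v set" where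
  "preprocess sel cs B' = fold (\<lambda>c T. greedy_color sel c B' T) cs {}"

definition prob_simplex :: "'v set \<Rightarrow> ('v \<Rightarrow> real) set" where
  "prob_simplex V = {x. (\<forall>v\<in>V. 0 \<le> x v) \<and> (\<Sum>v\<in>V. x v) = 1}"

(* objective of LP(S) at x: the largest feasible \<xi>, i.e. min over colours *)
definition lp_obj :: "'v set \<Rightarrow> ('c \<Rightarrow> 'v set \<Rightarrow> real) \<Rightarrow> 'c set \<Rightarrow> nat \<Rightarrow> 'v set \<Rightarrow> ('v \<Rightarrow> real) \<Rightarrow> real" where
  "lp_obj V g D b S x = Min ((\<lambda>c. \<Sum>v\<in>V. x v * (real b * marg (g c) {v} S + g c S)) ` D)"

definition lp_optimal :: "'v set \<Rightarrow> ('c \<Rightarrow> 'v set \<Rightarrow> real) \<Rightarrow> 'c set \<Rightarrow> nat \<Rightarrow> 'v set \<Rightarrow> ('v \<Rightarrow> real) \<Rightarrow> bool" where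
  "lp_optimal V g D b S x \<longleftrightarrow> x \<in> prob_simplex V \<and> (\<forall>y\<in>prob_simplex V. lp_obj V g D b S y \<le> lp_obj V g D b S x)"

definition sample :: "'v set \<Rightarrow> ('v \<Rightarrow> real) \<Rightarrow> 'v pmf" where
  "sample V x = embed_pmf (\<lambda>v. if v \<in> V then x v else 0)"

(* one run of the inner loop: i sampling rounds, sol S being the chosen optimal solution of LP(S) *)
primrec alg2_run :: "'v set \<Rightarrow> ('v set \<Rightarrow> 'v \<Rightarrow> real) \<Rightarrow> nat \<Rightarrow> 'v set pmf" where
  "alg2_run V sol 0 = return_pmf {}"
| "alg2_run V sol (Suc i) =
     bind_pmf (alg2_run V sol i) (\<lambda>S. map_pmf (\<lambda>v. insert v S) (sample V (sol S)))"

primrec alg2_rep :: "'v set \<Rightarrow> ('c \<Rightarrow> 'v set \<Rightarrow> real) \<Rightarrow> 'c set \<Rightarrow> nat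
                      \<Rightarrow> ('v set \<Rightarrow> 'v \<Rightarrow> real) \<Rightarrow> nat \<Rightarrow> 'v set pmf" where
  "alg2_rep V g D b sol 0 = return_pmf {}"
| "alg2_rep V g D b sol (Suc j) =
     bind_pmf (alg2_rep V g D b sol j) (\<lambda>Sbest.
       bind_pmf (alg2_run V sol b) (\<lambda>S.
         return_pmf (if Min ((\<lambda>c. g c Sbest) ` D) \<le> Min ((\<lambda>c. g c S) ` D) then S else Sbest)))"

definition alg2 :: "'v set \<Rightarrow> ('c \<Rightarrow> 'v set \<Rightarrow> real) \<Rightarrow> 'c set \<Rightarrow> nat \<Rightarrow> real
                     \<Rightarrow> ('v set \<Rightarrow> 'v \<Rightarrow> real) \<Rightarrow> 'v set pmf" where
  "alg2 V g D b \<delta> sol = alg2_rep V g D b sol (nat \<lceil>log 2 (2 / \<delta>)\<rceil>)"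

end

theory Submission imports Defs begin

lemma ms_nonneg: "mono_submod V h \<Longrightarrow> A \<subseteq> V \<Longrightarrow> 0 \<le> h A"
  unfolding mono_submod_def by blast
lemma ms_mono: "mono_submod V h \<Longrightarrow> A \<subseteq> B \<Longrightarrow> B \<subseteq> V \<Longrightarrow> h A \<le> h B"
  unfolding mono_submod_def by blast
lemma ms_sub: "mono_submod V h \<Longrightarrow> A \<subseteq> V \<Longrightarrow> B \<subseteq> V \<Longrightarrow> h (A \<union> B) + h (A \<inter> B) \<le> h A + h B"
  unfolding mono_submod_def by blast

lemma marg_nonneg: "mono_submod V h \<Longrightarrow> S \<subseteq> V \<Longrightarrow> v \<in> V \<Longrightarrow> 0 \<le> marg h {v} S"
  unfolding marg_def using ms_mono[of V h S "S \<union> {v}"] by auto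

lemma marg_anti:
  assumes h: "mono_submod V h" and AB: "A \<subseteq> B" "B \<subseteq> V" and v: "v \<in> V"
  shows "marg h {v} B \<le> marg h {v} A"
proof (cases "v \<in> B")
  case True
  then have "marg h {v} B = 0" unfolding marg_def by (simp add: insert_absorb)
  then show ?thesis using marg_nonneg[OF h _ v, of A] AB by auto
next
  case False
  have s: "h ((A \<union> {v}) \<union> B) + h ((A \<union> {v}) \<inter> B) \<le> h (A \<union> {v}) + h B"
    using ms_sub[OF h, of "A \<union> {v}" B] AB v by auto
  have e1: "(A \<union> {v}) \<union> B = B \<union> {v}" using AB by auto
  have e2: "(A \<union> {v}) \<inter> B = A" using AB False by auto
  have "h (B \<union> {v}) + h A \<le> h (A \<union> {v}) + h B" using s unfolding e1 e2 .
  then show ?thesis unfolding marg_def by linarith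
qed

lemma marg_sum:
  assumes h: "mono_submod V h" and "finite A" "A \<subseteq> V" "S \<subseteq> V"
  shows "h (S \<union> A) - h S \<le> (\<Sum>v\<in>A. marg h {v} S)"
  using assms(2,3)
proof (induction A rule: finite_induct)
  case empty then show ?case by simp
next
  case (insert a A)
  have "marg h {a} (S \<union> A) \<le> marg h {a} S"
    using marg_anti[OF h, of S "S \<union> A" a] insert assms(4) by auto
  then have "h (S \<union> insert a A) - h (S \<union> A) \<le> marg h {a} S"
    unfolding marg_def by (simp add: Un_commute insert_commute)
  then show ?case using insert by simp
qed

lemma greedy_props:
  assumes h: "mono_submod V h" and sel: "\<forall>T\<subseteq>V. greedy_choice V h T (sel c T)"
    and T0: "T0 \<subseteq> V"
  shows "greedy_color sel c n T0 \<subseteq> V \<and> T0 \<subseteq> greedy_color sel c n T0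
     \<and> card (greedy_color sel c n T0) \<le> card T0 + n
     \<and> (\<forall>v\<in>V. real n * marg h {v} (greedy_color sel c n T0) \<le> h (greedy_color sel c n T0) - h T0)"
proof (induction n)
  case 0 then show ?case using T0 by simp
next
  case (Suc n)
  define G where "G = greedy_color sel c n T0"
  have GV: "G \<subseteq> V" and T0G: "T0 \<subseteq> G" and cG: "card G \<le> card T0 + n"
    and IH: "\<forall>v\<in>V. real n * marg h {v} G \<le> h G - h T0" using Suc by (auto simp: G_def)
  have gc: "greedy_choice V h G (sel c G)" using sel GV by auto
  then have sV: "sel c G \<in> V" and best: "\<forall>u\<in>V. marg h {u} G \<le> marg h {sel c G} G"
    unfolding greedy_choice_def by auto
  have eq: "greedy_color sel c (Suc n) T0 = insert (sel c G) G" by (simp add: G_def Let_def)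
  have fin: "finite V \<Longrightarrow> True" by simp
  have V1: "insert (sel c G) G \<subseteq> V" using sV GV by auto
  have "card (insert (sel c G) G) \<le> card T0 + Suc n"
    using cG card_insert_le_m1 
    by (metis add_Suc_right card.infinite card_insert_if finite_insert le_SucI nat_le_linear not_less_eq_eq Suc_le_mono)
  moreover have "\<forall>v\<in>V. real (Suc n) * marg h {v} (insert (sel c G) G) \<le> h (insert (sel c G) G) - h T0"
  proof
    fix v assume v: "v \<in> V"
    have a1: "marg h {v} (insert (sel c G) G) \<le> marg h {v} G"
      using marg_anti[OF h, of G "insert (sel c G) G" v] V1 v by auto
    have a2: "marg h {v} G \<le> marg h {sel c G} G" using best v by auto
    have a3: "h (insert (sel c G) G) = h G + marg h {sel c G} G" unfolding marg_def by simp
    have "real (Suc n) * marg h {v} (insert (sel c G) G) \<le> real n * marg h {v} G + marg h {v} G"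
      using a1 mult_left_mono[OF a1, of "real n"] by (simp add: algebra_simps)
    also have "\<dots> \<le> h G - h T0 + marg h {sel c G} G" using IH v a2 by auto
    finally show "real (Suc n) * marg h {v} (insert (sel c G) G) \<le> h (insert (sel c G) G) - h T0"
      using a3 by linarith
  qed
  ultimately show ?case using eq V1 T0G by auto
qed

lemma fold_props:
  assumes "\<forall>c\<in>set cs. \<forall>X\<subseteq>V. F c X \<subseteq> V \<and> X \<subseteq> F c X \<and> card (F c X) \<le> card X + n"
    and "X \<subseteq> V"
  shows "fold F cs X \<subseteq> V \<and> X \<subseteq> fold F cs X \<and> card (fold F cs X) \<le> card X + length cs * n"
  using assms
proof (induction cs arbitrary: X)
  case Nil then show ?case by simp
next
  case (Cons c cs)
  have 1: "F c X \<subseteq> V" "X \<subseteq> F c X" "card (F c X) \<le> card X + n" using Cons.prems by auto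
  have "fold F cs (F c X) \<subseteq> V \<and> F c X \<subseteq> fold F cs (F c X) \<and> card (fold F cs (F c X)) \<le> card (F c X) + length cs * n"
    using Cons.IH[of "F c X"] Cons.prems 1 by auto
  then show ?case using 1 by auto
qed

lemma preprocess_props:
  assumes ms: "\<forall>c\<in>set cs. mono_submod V (f c)"
    and sel: "\<forall>c\<in>set cs. \<forall>T\<subseteq>V. greedy_choice V (f c) T (sel c T)"
  shows "preprocess sel cs B' \<subseteq> V \<and> card (preprocess sel cs B') \<le> length cs * B'
     \<and> (\<forall>c\<in>set cs. \<forall>v\<in>V. real B' * marg (f c) {v} (preprocess sel cs B') \<le> f c (preprocess sel cs B'))"
proof -
  define F where "F = (\<lambda>c T. greedy_color sel c B' T)"
  have Fp: "\<forall>c\<in>set cs. \<forall>X\<subseteq>V. F c X \<subseteq> V \<and> X \<subseteq> F c X \<and> card (F c X) \<le> card X + B'"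
    using greedy_props[OF _ _, of V "f _" sel] ms sel unfolding F_def by blast
  have P: "preprocess sel cs B' = fold F cs {}" unfolding preprocess_def F_def by simp
  have main: "fold F cs {} \<subseteq> V \<and> card (fold F cs {}) \<le> length cs * B'"
    using fold_props[OF Fp, of "{}"] by simp
  have "\<forall>c\<in>set cs. \<forall>v\<in>V. real B' * marg (f c) {v} (fold F cs {}) \<le> f c (fold F cs {})"
  proof (intro ballI)
    fix c v assume c: "c \<in> set cs" and v: "v \<in> V"
    obtain xs ys where cs: "cs = xs @ c # ys" using split_list[OF c] by blast
    define X0 where "X0 = fold F xs {}"
    define X1 where "X1 = F c X0"
    have X0: "X0 \<subseteq> V" using fold_props[of xs V F B' "{}"] Fp cs unfolding X0_def by auto
    have g: "X1 \<subseteq> V \<and> X0 \<subseteq> X1 \<and> card X1 \<le> card X0 + B'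
      \<and> (\<forall>v\<in>V. real B' * marg (f c) {v} X1 \<le> f c X1 - f c X0)"
      using greedy_props[of V "f c" sel c X0 B'] ms sel c X0 unfolding X1_def F_def by auto
    have eq: "fold F cs {} = fold F ys X1" unfolding cs X1_def X0_def by simp
    have Y: "fold F ys X1 \<subseteq> V \<and> X1 \<subseteq> fold F ys X1"
      using fold_props[of ys V F B' X1] Fp cs g by auto
    have hm: "mono_submod V (f c)" using ms c by auto
    have a1: "marg (f c) {v} (fold F ys X1) \<le> marg (f c) {v} X1"
      using marg_anti[OF hm, of X1 "fold F ys X1" v] Y v by auto
    have a2: "real B' * marg (f c) {v} (fold F ys X1) \<le> real B' * marg (f c) {v} X1"
      using mult_left_mono[OF a1] by simp
    have a3: "0 \<le> f c X0" using ms_nonneg[OF hm X0] .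
    have a4: "f c X1 \<le> f c (fold F ys X1)" using ms_mono[OF hm] Y by auto
    show "real B' * marg (f c) {v} (fold F cs {}) \<le> f c (fold F cs {})"
      unfolding eq using a2 a3 a4 g v by fastforce
  qed
  then show ?thesis using main P by simp
qed

lemma sample_pmf:
  assumes V: "finite V" and x: "x \<in> prob_simplex V"
  shows "pmf (sample V x) v = (if v \<in> V then x v else 0)"
proof -
  let ?f = "\<lambda>v. if v \<in> V then x v else 0"
  have nn: "\<And>v. 0 \<le> ?f v" using x unfolding prob_simplex_def by auto
  have "(\<integral>\<^sup>+v. ennreal (?f v) \<partial>count_space UNIV) = (\<Sum>v\<in>V. ennreal (?f v))"
    by (rule nn_integral_count_space'[OF V]) auto
  also have "\<dots> = ennreal (\<Sum>v\<in>V. ?f v)" using nn by (intro sum_ennreal) blast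
  also have "(\<Sum>v\<in>V. ?f v) = 1" using x unfolding prob_simplex_def by simp
  finally have pr: "(\<integral>\<^sup>+v. ennreal (?f v) \<partial>count_space UNIV) = 1" by simp
  show ?thesis unfolding sample_def using pmf_embed_pmf[of ?f, OF nn pr] by simp
qed

lemma sample_set:
  assumes V: "finite V" and x: "x \<in> prob_simplex V"
  shows "set_pmf (sample V x) \<subseteq> V"
  using sample_pmf[OF V x] by (auto simp: set_pmf_eq)

lemma sample_expect:
  assumes V: "finite V" and x: "x \<in> prob_simplex V"
  shows "measure_pmf.expectation (sample V x) F = (\<Sum>v\<in>V. x v * F v)"
proof -
  have "measure_pmf.expectation (sample V x) F = (\<Sum>v\<in>V. F v * pmf (sample V x) v)"
    using sample_set[OF V x] by (intro integral_measure_pmf_real[OF V]) auto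
  also have "\<dots> = (\<Sum>v\<in>V. x v * F v)" using sample_pmf[OF V x] by (intro sum.cong) auto
  finally show ?thesis .
qed

lemma run_support:
  assumes V: "finite V" and sol: "\<forall>S\<subseteq>V. sol S \<in> prob_simplex V"
  shows "S \<in> set_pmf (alg2_run V sol i) \<Longrightarrow> S \<subseteq> V \<and> card S \<le> i"
proof (induction i arbitrary: S)
  case 0 then show ?case by simp
next
  case (Suc i)
  from Suc.prems obtain S0 v where S0: "S0 \<in> set_pmf (alg2_run V sol i)"
    and v: "v \<in> set_pmf (sample V (sol S0))" and S: "S = insert v S0" by auto
  have S0': "S0 \<subseteq> V" "card S0 \<le> i" using Suc.IH[OF S0] by auto
  have "v \<in> V" using sample_set[OF V] sol S0' v by blast
  moreover have "card (insert v S0) \<le> Suc i" using S0' card_insert_le_m1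
    by (metis V card_insert_if finite_subset le_SucI Suc_le_mono)
  ultimately show ?case using S S0' by auto
qed

lemma run_potential:
  assumes V: "finite V" and sol: "\<forall>S\<subseteq>V. sol S \<in> prob_simplex V"
    and step: "\<forall>i<n. \<forall>S\<subseteq>V. (\<Sum>v\<in>V. sol S v * \<Phi> (Suc i) (insert v S)) \<le> \<Phi> i S"
  shows "i \<le> n \<Longrightarrow> measure_pmf.expectation (alg2_run V sol i) (\<Phi> i) \<le> \<Phi> 0 {}"
proof (induction i)
  case 0 then show ?case by simp
next
  case (Suc i)
  have fin: "finite (Pow V)" using V by simp
  have sup: "set_pmf (alg2_run V sol i) \<subseteq> Pow V" using run_support[OF V sol] by auto
  have fin2: "finite (set_pmf (map_pmf (\<lambda>v. insert v S) (sample V (sol S))))" if "S \<in> Pow V" for S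
    using sample_set[OF V] sol that V by (auto intro: finite_subset)
  have "measure_pmf.expectation (alg2_run V sol (Suc i)) (\<Phi> (Suc i))
     = (\<Sum>S\<in>Pow V. pmf (alg2_run V sol i) S *\<^sub>R
          measure_pmf.expectation (map_pmf (\<lambda>v. insert v S) (sample V (sol S))) (\<Phi> (Suc i)))"
    unfolding alg2_run.simps by (rule pmf_expectation_bind[OF fin fin2 sup])
  also have "\<dots> = (\<Sum>S\<in>Pow V. pmf (alg2_run V sol i) S * (\<Sum>v\<in>V. sol S v * \<Phi> (Suc i) (insert v S)))"
    using sol by (intro sum.cong refl) (simp add: sample_expect[OF V])
  also have "\<dots> \<le> (\<Sum>S\<in>Pow V. pmf (alg2_run V sol i) S * \<Phi> i S)"
    using step Suc.prems by (intro sum_mono mult_left_mono) auto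
  also have "\<dots> = measure_pmf.expectation (alg2_run V sol i) (\<Phi> i)"
    using sup by (subst integral_measure_pmf_real[OF fin]) (auto simp: mult.commute)
  also have "\<dots> \<le> \<Phi> 0 {}" using Suc by simp
  finally show ?case .
qed

lemma prob_as_exp: "measure_pmf.prob M A = measure_pmf.expectation M (indicator A :: _ \<Rightarrow> real)"
  by simp

lemma rep_support:
  assumes V: "finite V" and sol: "\<forall>S\<subseteq>V. sol S \<in> prob_simplex V"
  shows "S \<in> set_pmf (alg2_rep V g D b sol j) \<Longrightarrow> S \<subseteq> V \<and> card S \<le> b"
proof (induction j arbitrary: S)
  case 0 then show ?case by simp
next
  case (Suc j)
  then show ?case using run_support[OF V sol] by (auto split: if_splits)
qed

lemma rep_bad:
  assumes V: "finite V" and sol: "\<forall>S\<subseteq>V. sol S \<in> prob_simplex V"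
    and run: "measure_pmf.prob (alg2_run V sol b) {S. Min ((\<lambda>c. g c S) ` D) < \<tau>} \<le> p"
  shows "measure_pmf.prob (alg2_rep V g D b sol j) {S. Min ((\<lambda>c. g c S) ` D) < \<tau>} \<le> p ^ j"
proof (induction j)
  case 0 then show ?case by simp
next
  case (Suc j)
  define m where "m = (\<lambda>S. Min ((\<lambda>c. g c S) ` D))"
  define Bad where "Bad = {S. m S < \<tau>}"
  define ch where "ch = (\<lambda>Sb S. if m Sb \<le> m S then S else Sb)"
  define R where "R = alg2_run V sol b"
  define P where "P = alg2_rep V g D b sol j"
  have p0: "0 \<le> p" using run measure_nonneg order_trans by blast
  have runB: "measure_pmf.prob R Bad \<le> p" using run unfolding R_def Bad_def m_def .
  have IH: "measure_pmf.prob P Bad \<le> p ^ j" using Suc unfolding P_def Bad_def m_def .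
  have fin: "finite (Pow V)" using V by simp
  have supR: "set_pmf R \<subseteq> Pow V" using run_support[OF V sol] unfolding R_def by auto
  have supP: "set_pmf P \<subseteq> Pow V" using rep_support[OF V sol, of _ g D b j] unfolding P_def by blast
  have ind: "(indicator Bad (ch Sb S) :: real) \<le> indicator Bad Sb * indicator Bad S" for Sb S
    unfolding ch_def Bad_def by (auto simp: indicator_def)
  have inner: "measure_pmf.expectation (bind_pmf R (\<lambda>S. return_pmf (ch Sb S))) (indicator Bad)
      \<le> indicator Bad Sb * p" for Sb
  proof -
    have "measure_pmf.expectation (bind_pmf R (\<lambda>S. return_pmf (ch Sb S))) (indicator Bad)
        = (\<Sum>S\<in>Pow V. pmf R S *\<^sub>R measure_pmf.expectation (return_pmf (ch Sb S)) (indicator Bad :: _ \<Rightarrow> real))"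
      by (rule pmf_expectation_bind[OF fin _ supR]) auto
    also have "\<dots> = (\<Sum>S\<in>Pow V. pmf R S * indicator Bad (ch Sb S))" by simp
    also have "\<dots> \<le> (\<Sum>S\<in>Pow V. pmf R S * (indicator Bad Sb * indicator Bad S))"
      using ind by (intro sum_mono mult_left_mono) auto
    also have "\<dots> = indicator Bad Sb * (\<Sum>S\<in>Pow V. indicator Bad S * pmf R S)"
      by (simp add: sum_distrib_left algebra_simps)
    also have "(\<Sum>S\<in>Pow V. indicator Bad S * pmf R S) = measure_pmf.expectation R (indicator Bad :: _ \<Rightarrow> real)"
      using supR by (subst integral_measure_pmf_real[OF fin]) auto
    also have "\<dots> = measure_pmf.prob R Bad" by simp
    finally show ?thesis using runB
      by (smt (verit, ccfv_SIG) indicator_pos_le mult_left_mono)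
  qed
  have fin2: "finite (set_pmf (bind_pmf R (\<lambda>S. return_pmf (ch Sb S))))" if "Sb \<in> Pow V" for Sb
    using supR that fin by (auto simp: ch_def intro: finite_subset[of _ "Pow V"])
  have "measure_pmf.prob (alg2_rep V g D b sol (Suc j)) Bad
      = measure_pmf.expectation (bind_pmf P (\<lambda>Sb. bind_pmf R (\<lambda>S. return_pmf (ch Sb S)))) (indicator Bad :: _ \<Rightarrow> real)"
    unfolding P_def R_def ch_def m_def by simp
  also have "\<dots> = (\<Sum>Sb\<in>Pow V. pmf P Sb *\<^sub>R measure_pmf.expectation (bind_pmf R (\<lambda>S. return_pmf (ch Sb S))) (indicator Bad :: _ \<Rightarrow> real))"
    by (rule pmf_expectation_bind[OF fin fin2 supP])
  also have "\<dots> \<le> (\<Sum>Sb\<in>Pow V. pmf P Sb * (indicator Bad Sb * p))"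
    using inner by (auto intro!: sum_mono mult_left_mono)
  also have "\<dots> = p * (\<Sum>Sb\<in>Pow V. indicator Bad Sb * pmf P Sb)"
    by (simp add: sum_distrib_left algebra_simps)
  also have "(\<Sum>Sb\<in>Pow V. indicator Bad Sb * pmf P Sb) = measure_pmf.expectation P (indicator Bad :: _ \<Rightarrow> real)"
    using supP by (subst integral_measure_pmf_real[OF fin]) auto
  also have "\<dots> = measure_pmf.prob P Bad" by simp
  finally have "measure_pmf.prob (alg2_rep V g D b sol (Suc j)) Bad \<le> p * measure_pmf.prob P Bad" .
  also have "\<dots> \<le> p * p ^ j" using IH p0 by (intro mult_left_mono) auto
  finally show ?case unfolding Bad_def m_def by simp
qed

lemma chord_exp:
  fixes l X M :: real
  assumes "0 \<le> l" "0 \<le> X" "X \<le> M" "0 < M"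
  shows "exp (- (l * X)) \<le> 1 - (X / M) * (1 - exp (- (l * M)))"
proof -
  define t where "t = X / M"
  have t: "0 \<le> t" "t \<le> 1" using assms by (auto simp: t_def)
  have "exp (l * ((1 - t) *\<^sub>R 0 + t *\<^sub>R (- M))) \<le> (1 - t) * exp (l * 0) + t * exp (l * (- M))"
    using convex_onD[OF convex_on_exp[OF assms(1)] t] by blast
  moreover have "(1 - t) *\<^sub>R 0 + t *\<^sub>R (- M) = - X" using assms by (simp add: t_def)
  ultimately show ?thesis by (simp add: t_def algebra_simps)
qed

lemma one_minus_exp_ge:
  fixes y :: real assumes "0 \<le> y" shows "y / (1 + y) \<le> 1 - exp (- y)"
proof -
  have "1 + y \<le> exp y" by simp
  then have "exp (- y) \<le> 1 / (1 + y)" using assms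
    by (simp add: exp_minus field_simps)
  moreover have "y / (1 + y) = 1 - 1 / (1 + y)" using assms by (simp add: field_simps)
  ultimately show ?thesis by linarith
qed

lemma step_ineq:
  fixes x X :: "'v \<Rightarrow> real"
  assumes V: "finite V" and x: "x \<in> prob_simplex V"
    and XM: "\<forall>v\<in>V. 0 \<le> X v \<and> X v \<le> M" and M: "0 < M"
    and l: "0 \<le> l" "l * M \<le> u" and b: "1 \<le> b"
    and drift: "a \<le> b * (\<Sum>v\<in>V. x v * X v) + h"
  shows "(\<Sum>v\<in>V. x v * exp (l * (a - (h + X v)))) \<le> exp ((1 - (1 / (1 + u)) / b) * l * (a - h))"
proof -
  define E where "E = (\<Sum>v\<in>V. x v * X v)"
  define q where "q = 1 / (1 + u)"
  have x0: "\<forall>v\<in>V. 0 \<le> x v" and x1: "(\<Sum>v\<in>V. x v) = 1" using x unfolding prob_simplex_def by auto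
  have u0: "0 \<le> u" using l M by (meson mult_nonneg_nonneg less_imp_le order_trans)
  have E0: "0 \<le> E" unfolding E_def using x0 XM by (intro sum_nonneg) auto
  have "(\<Sum>v\<in>V. x v * exp (- (l * X v))) \<le> (\<Sum>v\<in>V. x v * (1 - (X v / M) * (1 - exp (- (l * M)))))"
    using x0 XM chord_exp[OF l(1) _ _ M] by (intro sum_mono mult_left_mono) auto
  also have "\<dots> = (\<Sum>v\<in>V. x v) - ((1 - exp (- (l * M))) / M) * E"
  proof -
    have "(\<Sum>v\<in>V. x v * (1 - (X v / M) * (1 - exp (- (l * M)))))
        = (\<Sum>v\<in>V. x v - ((1 - exp (- (l * M))) / M) * (x v * X v))"
      by (intro sum.cong) (auto simp: algebra_simps diff_divide_distrib add_divide_distrib)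
    also have "\<dots> = (\<Sum>v\<in>V. x v) - ((1 - exp (- (l * M))) / M) * E"
      unfolding E_def by (simp add: sum_subtractf sum_distrib_left)
    finally show ?thesis .
  qed
  also have "\<dots> = 1 - ((1 - exp (- (l * M))) / M) * E" using x1 by simp
  finally have s1: "(\<Sum>v\<in>V. x v * exp (- (l * X v))) \<le> 1 - ((1 - exp (- (l * M))) / M) * E" .
  have lq: "l * q \<le> (1 - exp (- (l * M))) / M"
  proof -
    have "l * M / (1 + l * M) \<le> 1 - exp (- (l * M))" using one_minus_exp_ge l M by simp
    moreover have "l * M * q \<le> l * M / (1 + l * M)"
    proof -
      have "q \<le> 1 / (1 + l * M)" unfolding q_def using l M u0
        by (intro divide_left_mono) (auto intro!: mult_pos_pos add_pos_nonneg)
      then have "l * M * q \<le> l * M * (1 / (1 + l * M))" using l M by (intro mult_left_mono) auto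
      then show ?thesis by simp
    qed
    ultimately have "l * q * M \<le> 1 - exp (- (l * M))" by (simp add: algebra_simps)
    then show ?thesis using M by (simp add: field_simps)
  qed
  have "1 - ((1 - exp (- (l * M))) / M) * E \<le> 1 - l * q * E"
    using mult_right_mono[OF lq E0] by simp
  also have "\<dots> \<le> exp (- (l * q * E))" using exp_ge_add_one_self[of "- (l * q * E)"] by simp
  finally have s2: "(\<Sum>v\<in>V. x v * exp (- (l * X v))) \<le> exp (- (l * q * E))" using s1 by linarith
  have "(\<Sum>v\<in>V. x v * exp (l * (a - (h + X v)))) = exp (l * (a - h)) * (\<Sum>v\<in>V. x v * exp (- (l * X v)))"
    by (simp add: sum_distrib_left algebra_simps flip: exp_add)
  also have "\<dots> \<le> exp (l * (a - h)) * exp (- (l * q * E))" using s2 by simp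
  also have "\<dots> = exp (l * (a - h) - l * q * E)" by (simp add: exp_diff exp_minus divide_inverse)
  also have "\<dots> \<le> exp ((1 - q / b) * l * (a - h))"
  proof -
    have q0: "0 \<le> q" "q \<le> 1" using u0 by (auto simp: q_def)
    have "l * (a - h) - l * q * E \<le> (1 - q / b) * l * (a - h)"
    proof (cases "a - h \<le> 0")
      case True
      have "0 \<le> l * q * E" using l q0 E0 by simp
      moreover have "0 \<le> (q / b) * l * (- (a - h))" using True l q0 b by simp
      moreover have "(1 - q / b) * l * (a - h) = l * (a - h) - (q / b) * l * (a - h)" by (simp add: algebra_simps)
      ultimately show ?thesis by linarith
    next
      case False
      have "(a - h) / b \<le> E" using drift b unfolding E_def by (simp add: field_simps)
      then have "l * q * ((a - h) / b) \<le> l * q * E" using l q0 by (intro mult_left_mono) auto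
      then have "l * (a - h) - l * q * E \<le> l * (a - h) - l * q * ((a - h) / b)" by (rule diff_left_mono)
      also have "\<dots> = (1 - q / b) * l * (a - h)" by (simp add: algebra_simps)
      finally show ?thesis .
    qed
    then show ?thesis by simp
  qed
  finally show ?thesis unfolding q_def .
qed

lemma color_bound:
  fixes h :: "'v set \<Rightarrow> real"
  assumes V: "finite V" and sol: "\<forall>S\<subseteq>V. sol S \<in> prob_simplex V"
    and h0: "0 \<le> h {}"
    and hM: "\<forall>S\<subseteq>V. \<forall>v\<in>V. 0 \<le> h (insert v S) - h S \<and> h (insert v S) - h S \<le> M"
    and M: "0 < M"
    and drift: "\<forall>S\<subseteq>V. a \<le> real b * (\<Sum>v\<in>V. sol S v * (h (insert v S) - h S)) + h S"
    and b: "1 \<le> b" and u: "0 \<le> u" and a: "0 \<le> a"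
  shows "measure_pmf.prob (alg2_run V sol b) {S. h S < \<tau>}
     \<le> exp ((u / M) * (exp (- (1 / (1 + u))) * a - a + \<tau>))"
proof -
  define q where "q = 1 / (1 + u)"
  define r where "r = 1 - q / real b"
  define L where "L = u / M"
  define \<Phi> where "\<Phi> = (\<lambda>i S. exp (L * r ^ (b - i) * (a - h S)))"
  have q0: "0 \<le> q" "q \<le> 1" using u by (auto simp: q_def)
  have r0: "0 \<le> r" "r \<le> 1" using q0 b by (auto simp: r_def field_simps)
  have L0: "0 \<le> L" using u M by (simp add: L_def)
  have step: "\<forall>i<b. \<forall>S\<subseteq>V. (\<Sum>v\<in>V. sol S v * \<Phi> (Suc i) (insert v S)) \<le> \<Phi> i S"
  proof (intro allI impI)
    fix i S assume i: "i < b" and S: "S \<subseteq> V"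
    define l where "l = L * r ^ (b - Suc i)"
    have l0: "0 \<le> l" using L0 r0 by (simp add: l_def)
    have lM: "l * M \<le> u"
    proof -
      have "l * M = u * r ^ (b - Suc i)" using M by (simp add: l_def L_def)
      also have "\<dots> \<le> u * 1" using u r0 by (intro mult_left_mono power_le_one) auto
      finally show ?thesis by simp
    qed
    have A: "(\<Sum>v\<in>V. sol S v * exp (l * (a - (h S + (h (insert v S) - h S)))))
        \<le> exp ((1 - (1 / (1 + u)) / real b) * l * (a - h S))"
      by (rule step_ineq[OF V]) (use sol S hM M l0 lM b drift in auto)
    have Eq: "(1 - (1 / (1 + u)) / real b) * l = L * r ^ (b - i)"
    proof -
      have "b - i = Suc (b - Suc i)" using i by simp
      then show ?thesis by (simp add: l_def r_def q_def algebra_simps)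
    qed
    from A have "(\<Sum>v\<in>V. sol S v * exp (l * (a - (h S + (h (insert v S) - h S)))))
        \<le> exp (L * r ^ (b - i) * (a - h S))" by (simp only: Eq)
    then show "(\<Sum>v\<in>V. sol S v * \<Phi> (Suc i) (insert v S)) \<le> \<Phi> i S"
      unfolding \<Phi>_def l_def by simp
  qed
  have E: "measure_pmf.expectation (alg2_run V sol b) (\<Phi> b) \<le> \<Phi> 0 {}"
    by (rule run_potential[OF V sol step]) simp
  have rb: "r ^ b \<le> exp (- q)"
  proof -
    have "r \<le> exp (- q / real b)" unfolding r_def using exp_ge_add_one_self[of "- q / real b"] by simp
    then have "r ^ b \<le> exp (- q / real b) ^ b" using r0 by (intro power_mono) auto
    also have "\<dots> = exp (real b * (- q / real b))" by (rule exp_of_nat_mult[symmetric])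
    also have "\<dots> = exp (- q)" using b by simp
    finally show ?thesis .
  qed
  have P0: "\<Phi> 0 {} \<le> exp (L * exp (- q) * a)"
  proof -
    have "L * r ^ b * (a - h {}) \<le> L * r ^ b * a" using L0 r0 h0 by (intro mult_left_mono) auto
    also have "\<dots> \<le> L * exp (- q) * a" using L0 rb a by (intro mult_right_mono mult_left_mono) auto
    finally show ?thesis unfolding \<Phi>_def by simp
  qed
  define K where "K = exp (L * (a - \<tau>))"
  have K0: "0 < K" by (simp add: K_def)
  have fin: "finite (set_pmf (alg2_run V sol b))"
    using run_support[OF V sol] V by (rule_tac finite_subset[of _ "Pow V"]) auto
  have ptw: "K * (indicator {S. h S < \<tau>} S :: real) \<le> \<Phi> b S" for S
  proof (cases "h S < \<tau>")
    case True
    have "L * (a - \<tau>) \<le> L * (a - h S)" using True L0 by (intro mult_left_mono) auto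
    then show ?thesis using True by (simp add: K_def \<Phi>_def)
  qed (simp add: \<Phi>_def)
  have "K * measure_pmf.prob (alg2_run V sol b) {S. h S < \<tau>}
      = measure_pmf.expectation (alg2_run V sol b) (\<lambda>S. K * (indicator {S. h S < \<tau>} S :: real))"
    by simp
  also have "\<dots> \<le> measure_pmf.expectation (alg2_run V sol b) (\<Phi> b)"
    using ptw by (intro integral_mono integrable_measure_pmf_finite[OF fin]) auto
  also have "\<dots> \<le> exp (L * exp (- q) * a)" using E P0 by linarith
  finally have "K * measure_pmf.prob (alg2_run V sol b) {S. h S < \<tau>} \<le> exp (L * exp (- q) * a)" .
  then have "measure_pmf.prob (alg2_run V sol b) {S. h S < \<tau>} \<le> exp (L * exp (- q) * a) / K"
    using K0 by (simp add: field_simps)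
  also have "\<dots> = exp (L * (exp (- q) * a - a + \<tau>))" unfolding K_def
    by (simp add: exp_diff[symmetric] algebra_simps)
  finally show ?thesis unfolding L_def q_def .
qed

lemma drift_lemma:
  assumes V: "finite V" and D: "finite D" "D \<noteq> {}"
    and ms: "\<forall>c\<in>D. mono_submod V (h c)"
    and Sst: "Sst \<subseteq> V" "Sst \<noteq> {}" "card Sst \<le> B" and bB: "b \<le> B"
    and hO: "\<forall>c\<in>D. Ov \<le> h c Sst" and O0: "0 \<le> Ov"
    and S: "S \<subseteq> V" and opt: "lp_optimal V h D b S x" and c: "c \<in> D"
  shows "real b / real B * Ov \<le> real b * (\<Sum>v\<in>V. x v * marg (h c) {v} S) + h c S"
proof -
  define m where "m = card Sst"
  have finS: "finite Sst" using Sst V finite_subset by blast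
  have m1: "1 \<le> m" using Sst finS by (simp add: m_def Suc_le_eq card_gt_0_iff)
  have mB: "m \<le> B" using Sst by (simp add: m_def)
  define y where "y = (\<lambda>v. if v \<in> Sst then 1 / real m else 0)"
  have sumy: "(\<Sum>v\<in>V. y v * F v) = (\<Sum>v\<in>Sst. F v) / real m" for F
  proof -
    have "(\<Sum>v\<in>V. y v * F v) = (\<Sum>v\<in>V. if v \<in> Sst then F v / real m else 0)"
      unfolding y_def by (intro sum.cong) auto
    also have "\<dots> = (\<Sum>v\<in>V \<inter> Sst. F v / real m)" using V by (simp add: sum.If_cases)
    also have "V \<inter> Sst = Sst" using Sst by auto
    finally show ?thesis by (simp add: sum_divide_distrib)
  qed
  have yS: "y \<in> prob_simplex V"
    unfolding prob_simplex_def using sumy[of "\<lambda>_. 1"] m1 by (auto simp: y_def m_def)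
  have ylow: "real b / real B * Ov \<le> lp_obj V h D b S y"
    unfolding lp_obj_def
  proof (subst Min_ge_iff, use D in simp, use D in simp, intro ballI)
    fix t assume "t \<in> (\<lambda>c. \<Sum>v\<in>V. y v * (real b * marg (h c) {v} S + h c S)) ` D"
    then obtain d where d: "d \<in> D" and t: "t = (\<Sum>v\<in>V. y v * (real b * marg (h d) {v} S + h d S))" by auto
    have hd: "mono_submod V (h d)" using ms d by auto
    define P where "P = (\<Sum>v\<in>Sst. marg (h d) {v} S)"
    define H where "H = h d S"
    have "t = (\<Sum>v\<in>Sst. real b * marg (h d) {v} S + h d S) / real m" unfolding t sumy ..
    also have "\<dots> = real b / real m * P + H" using m1
      by (simp add: sum.distrib P_def H_def m_def sum_distrib_left[symmetric] field_simps)
    finally have t2: "t = real b / real m * P + H" .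
    have P0: "0 \<le> P" unfolding P_def using marg_nonneg[OF hd S] Sst by (intro sum_nonneg) auto
    have "h d (S \<union> Sst) - h d S \<le> P" unfolding P_def by (rule marg_sum[OF hd finS Sst(1) S])
    moreover have "Ov \<le> h d (S \<union> Sst)" using hO d ms_mono[OF hd, of Sst "S \<union> Sst"] Sst S by force
    ultimately have PO: "Ov - H \<le> P" unfolding H_def by linarith
    have H0: "0 \<le> H" unfolding H_def using ms_nonneg[OF hd S] .
    define tt where "tt = real b / real m"
    have tt0: "0 \<le> tt" unfolding tt_def by simp
    have ttB: "real b / real B \<le> tt" unfolding tt_def using m1 mB
      by (intro divide_left_mono) auto
    have bB1: "real b / real B \<le> 1" using bB by (cases "B = 0") auto
    show "real b / real B * Ov \<le> t"
    proof (cases "1 \<le> tt")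
      case True
      have "tt * P \<ge> P" using True P0 using mult_right_mono[of 1 tt P] by simp
      moreover have "real b / real B * Ov \<le> Ov" using mult_right_mono[OF bB1 O0] by simp
      ultimately show ?thesis using t2 PO unfolding tt_def by linarith
    next
      case False
      have "tt * (Ov - H) \<le> tt * P" using PO tt0 by (intro mult_left_mono) auto
      then have 1: "tt * Ov - tt * H \<le> tt * P" by (simp add: algebra_simps)
      have 2: "real b / real B * Ov \<le> tt * Ov" using ttB O0 by (intro mult_right_mono) auto
      have 3: "tt * H \<le> H" using False H0 mult_right_mono[of tt 1 H] by simp
      have 4: "t = tt * P + H" using t2 unfolding tt_def .
      show ?thesis using 1 2 3 4 by linarith
    qed
  qed
  have xS: "x \<in> prob_simplex V" and xopt: "lp_obj V h D b S y \<le> lp_obj V h D b S x"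
    using opt yS unfolding lp_optimal_def by auto
  have "lp_obj V h D b S x \<le> (\<Sum>v\<in>V. x v * (real b * marg (h c) {v} S + h c S))"
    unfolding lp_obj_def using D c by (intro Min_le) auto
  also have "\<dots> = real b * (\<Sum>v\<in>V. x v * marg (h c) {v} S) + h c S * (\<Sum>v\<in>V. x v)"
    by (simp add: sum.distrib sum_distrib_left sum_distrib_right algebra_simps)
  also have "(\<Sum>v\<in>V. x v) = 1" using xS unfolding prob_simplex_def by simp
  finally show ?thesis using ylow xopt by simp
qed

lemma numeric:
  fixes \<epsilon> Kl Ov a \<tau> Bp :: real
  assumes e: "0 < \<epsilon>" "\<epsilon> < 1" and K: "0 < Kl" and O: "0 < Ov"
    and Bp: "Bp = 36 * Kl / \<epsilon>^2" and a: "(1 - \<epsilon> / 3) * Ov \<le> a"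
    and \<tau>: "\<tau> = (1 - 1 / exp 1 - \<epsilon>) * Ov"
  shows "((\<epsilon> / 2) / (Ov / Bp)) * (exp (- (1 / (1 + \<epsilon> / 2))) * a - a + \<tau>) \<le> - (2 * Kl)"
proof -
  define u where "u = \<epsilon> / 2"
  define q where "q = 1 / (1 + u)"
  define E1 where "E1 = 1 / exp (1::real)"
  have u: "0 < u" "u < 1/2" using e by (auto simp: u_def)
  have q: "0 < q" using u by (simp add: q_def)
  have E1: "0 < E1" "E1 \<le> 1/2"
  proof -
    have "2 \<le> exp (1::real)" using exp_ge_add_one_self[of 1] by simp
    then show "0 < E1" "E1 \<le> 1/2" by (auto simp: E1_def field_simps)
  qed
  have eq: "exp (- q) \<le> (1 + u) * E1"
  proof -
    have "q \<le> exp (q - 1)" using exp_ge_add_one_self[of "q - 1"] by simp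
    then have "1 / exp (q - 1) \<le> 1 / q" using q by (intro divide_left_mono) auto
    moreover have "exp (- q) = E1 * (1 / exp (q - 1))"
      by (simp add: E1_def exp_diff exp_minus field_simps)
    moreover have "1 / q = 1 + u" by (simp add: q_def)
    ultimately show ?thesis using E1 mult_left_mono[of "1 / exp (q - 1)" "1 + u" E1]
      by (simp add: mult.commute)
  qed
  have c1: "0 \<le> 1 - (1 + u) * E1"
  proof -
    have "(1 + u) * E1 \<le> (3/2) * (1/2)" using u E1 by (intro mult_mono) auto
    then show ?thesis by simp
  qed
  have a0: "0 \<le> a"
  proof -
    have "0 \<le> (1 - \<epsilon> / 3) * Ov" using e O by (intro mult_nonneg_nonneg) auto
    then show ?thesis using a by linarith
  qed
  have s1: "exp (- q) * a - a \<le> - ((1 - (1 + u) * E1) * a)"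
    using mult_right_mono[OF eq a0] by (simp add: algebra_simps)
  have s2: "(1 - (1 + u) * E1) * ((1 - \<epsilon> / 3) * Ov) \<le> (1 - (1 + u) * E1) * a"
    using mult_left_mono[OF a c1] .
  define X where "X = exp (- q) * a - a + \<tau>"
  have X1: "X \<le> Ov * (- (1 - (1 + u) * E1) * (1 - \<epsilon> / 3) + 1 - E1 - \<epsilon>)"
  proof -
    have "Ov * (- (1 - (1 + u) * E1) * (1 - \<epsilon> / 3) + 1 - E1 - \<epsilon>)
        = - ((1 - (1 + u) * E1) * ((1 - \<epsilon> / 3) * Ov)) + \<tau>"
    proof -
      have t: "\<tau> = (1 - E1 - \<epsilon>) * Ov" unfolding \<tau> E1_def ..
      show ?thesis unfolding t by (simp add: field_simps)
    qed
    note eqn = this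
    have "X \<le> - ((1 - (1 + u) * E1) * a) + \<tau>" using s1 unfolding X_def by linarith
    also have "\<dots> \<le> - ((1 - (1 + u) * E1) * ((1 - \<epsilon> / 3) * Ov)) + \<tau>" using s2 by linarith
    also have "\<dots> = Ov * (- (1 - (1 + u) * E1) * (1 - \<epsilon> / 3) + 1 - E1 - \<epsilon>)" using eqn by simp
    finally show ?thesis .
  qed
  have X2: "- (1 - (1 + u) * E1) * (1 - \<epsilon> / 3) + 1 - E1 - \<epsilon> \<le> - (5 * \<epsilon> / 12)"
  proof -
    have "- (1 - (1 + u) * E1) * (1 - \<epsilon> / 3) + 1 - E1 - \<epsilon>
        = u * E1 + (\<epsilon> / 3) * (1 - E1 - u * E1) - \<epsilon>" by (simp add: algebra_simps)
    moreover have "u * E1 \<le> u * (1/2)" using u E1 by (intro mult_left_mono) auto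
    moreover have "(\<epsilon> / 3) * (1 - E1 - u * E1) \<le> (\<epsilon> / 3) * 1"
    proof -
      have "0 \<le> u * E1" using u E1 by simp
      then show ?thesis using e E1 by (intro mult_left_mono) auto
    qed
    ultimately show ?thesis unfolding u_def by linarith
  qed
  have X3: "X \<le> - (5 * \<epsilon> / 12) * Ov"
  proof -
    have "Ov * (- (1 - (1 + u) * E1) * (1 - \<epsilon> / 3) + 1 - E1 - \<epsilon>) \<le> Ov * (- (5 * \<epsilon> / 12))"
      using mult_left_mono[OF X2, of Ov] O by simp
    then show ?thesis using X1 by (simp add: mult.commute)
  qed
  have Bp0: "0 < Bp" using Bp K e by simp
  have L0: "0 \<le> u / (Ov / Bp)" using u O Bp0 by simp
  have "(u / (Ov / Bp)) * X \<le> (u / (Ov / Bp)) * (- (5 * \<epsilon> / 12) * Ov)"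
    using mult_left_mono[OF X3 L0] .
  also have "\<dots> = - (5 * \<epsilon> * u * Bp / 12)" using O by simp
  also have "\<dots> = - (15 / 2 * Kl)" using e unfolding Bp u_def by (simp add: power2_eq_square)
  also have "\<dots> \<le> - (2 * Kl)" using K by simp
  finally show ?thesis unfolding X_def u_def q_def .
qed

lemma OPT_props:
  assumes V: "finite V" and C: "finite C" "C \<noteq> {}" and ms: "\<forall>c\<in>C. mono_submod V (f c)"
  shows "0 \<le> OPT V C f B \<and> (\<exists>S. S \<subseteq> V \<and> card S \<le> B \<and> Min ((\<lambda>c. f c S) ` C) = OPT V C f B)"
proof -
  define Z where "Z = {Min ((\<lambda>c. f c S) ` C) | S. S \<subseteq> V \<and> card S \<le> B}"
  have Z: "Z = (\<lambda>S. Min ((\<lambda>c. f c S) ` C)) ` {S. S \<subseteq> V \<and> card S \<le> B}" unfolding Z_def by auto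
  have "finite {S. S \<subseteq> V \<and> card S \<le> B}" using V by (rule_tac finite_subset[of _ "Pow V"]) auto
  then have fin: "finite Z" unfolding Z by (rule finite_imageI)
  have "{} \<in> {S. S \<subseteq> V \<and> card S \<le> B}" by simp
  then have ne: "Z \<noteq> {}" unfolding Z by blast
  have "OPT V C f B = Max Z" unfolding OPT_def Z_def ..
  then have "OPT V C f B \<in> Z" using Max_in[OF fin ne] by simp
  then obtain S where S0: "S \<in> {S. S \<subseteq> V \<and> card S \<le> B}" and S1: "OPT V C f B = Min ((\<lambda>c. f c S) ` C)"
    unfolding Z by (rule imageE)
  have S: "S \<subseteq> V" "card S \<le> B" "Min ((\<lambda>c. f c S) ` C) = OPT V C f B" using S0 S1 by auto
  have "0 \<le> Min ((\<lambda>c. f c S) ` C)" using C ms ms_nonneg[OF _ S(1)] by (subst Min_ge_iff) auto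
  then show ?thesis using S by auto
qed


lemma g_ms:
  assumes "mono_submod V h" "T \<subseteq> V"
  shows "mono_submod V (\<lambda>A. h (A \<union> T))"
proof -
  have 1: "\<forall>A. A \<subseteq> V \<longrightarrow> 0 \<le> h (A \<union> T)" using assms ms_nonneg by blast
  have 2: "\<forall>A B. A \<subseteq> B \<and> B \<subseteq> V \<longrightarrow> h (A \<union> T) \<le> h (B \<union> T)"
    using assms ms_mono by (metis Un_mono order_refl sup.boundedI)
  have 3: "h ((A \<union> B) \<union> T) + h ((A \<inter> B) \<union> T) \<le> h (A \<union> T) + h (B \<union> T)" if "A \<subseteq> V" "B \<subseteq> V" for A B
  proof -
    have "(A \<union> T) \<union> (B \<union> T) = (A \<union> B) \<union> T" "(A \<union> T) \<inter> (B \<union> T) = (A \<inter> B) \<union> T" by auto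
    then show ?thesis using ms_sub[OF assms(1), of "A \<union> T" "B \<union> T"] that assms(2) by auto
  qed
  show ?thesis unfolding mono_submod_def using 1 2 3 by blast
qed

lemma half_pow_le:
  fixes \<delta> :: real assumes "0 < \<delta>" "\<delta> < 1"
  shows "(1/2) ^ nat \<lceil>log 2 (2 / \<delta>)\<rceil> \<le> \<delta>"
proof -
  define R where "R = nat \<lceil>log 2 (2 / \<delta>)\<rceil>"
  have "log 2 (2 / \<delta>) \<le> real R" unfolding R_def by linarith
  then have "2 powr (log 2 (2 / \<delta>)) \<le> 2 powr (real R)" by (intro powr_mono) auto
  moreover have "2 powr (log 2 (2 / \<delta>)) = 2 / \<delta>" using assms by simp
  moreover have "2 powr (real R) = (2::real) ^ R" by (simp add: powr_realpow)
  ultimately have "2 / \<delta> \<le> 2 ^ R" by simp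
  then have "1 / 2 ^ R \<le> \<delta> / 2" using assms by (simp add: field_simps)
  moreover have "(1/2::real) ^ R = 1 / 2 ^ R" by (simp add: power_one_over)
  ultimately have "(1/2::real) ^ R \<le> \<delta>" using assms by linarith
  then show ?thesis unfolding R_def .
qed

theorem theorem2:
  fixes V :: "'v set" and C :: "'c set" and f :: "'c \<Rightarrow> 'v set \<Rightarrow> real"
    and B B' :: nat and \<epsilon> \<delta> :: real
    and cs :: "'c list" and sel :: "'c \<Rightarrow> 'v set \<Rightarrow> 'v" and sol :: "'v set \<Rightarrow> 'v \<Rightarrow> real"
  assumes "finite V" and "V \<noteq> {}" and "finite C" and "C \<noteq> {}"
    and "\<forall>c\<in>C. mono_submod V (f c)"
    and "0 < B"
    and "card C \<ge> 2"
    and "0 < \<epsilon>" and "\<epsilon> < 1" and "0 < \<delta>" and "\<delta> < 1"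
    and "real B \<ge> 108 * real (card C) / \<epsilon> ^ 3 * ln (real (card C))"
    and "real B' = 1 / (\<epsilon> ^ 2 / (36 * ln (real (card C))))"
    and "distinct cs" and "set cs = C"
    and "\<forall>c\<in>C. \<forall>T\<subseteq>V. greedy_choice V (f c) T (sel c T)"
  defines "T \<equiv> preprocess sel cs B'"
    and "Ct \<equiv> {c\<in>C. f c (preprocess sel cs B') < OPT V C f B}"
    and "g \<equiv> (\<lambda>c A. f c (A \<union> preprocess sel cs B'))"
  assumes "Ct \<noteq> {} \<longrightarrow> (\<forall>S\<subseteq>V. lp_optimal V g Ct (B - card T) S (sol S))"
  shows "measure_pmf.prob
           (if Ct = {} then return_pmf {} else alg2 V g Ct (B - card T) \<delta> sol)
           {S. (1 - 1 / exp 1 - \<epsilon>) * OPT V C f B \<le> Min ((\<lambda>c. f c (T \<union> S)) ` C)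
               \<and> card (T \<union> S) \<le> B}
         \<ge> 1 - \<delta>"
proof -
  note V = assms(1) and Cfin = assms(3) and Cne = assms(4) and ms = assms(5) and B0 = assms(6)
    and k2 = assms(7) and e0 = assms(8) and e1 = assms(9) and d0 = assms(10) and d1 = assms(11)
    and Bbig = assms(12) and B'def = assms(13) and dist = assms(14) and setcs = assms(15)
    and selA = assms(16) and solA = assms(20)
  define k where "k = card C"
  define Kl where "Kl = ln (real k)"
  define Ov where "Ov = OPT V C f B"
  define b where "b = B - card T"
  define \<tau> where "\<tau> = (1 - 1 / exp 1 - \<epsilon>) * Ov"
  define Ev where "Ev = {S. (1 - 1 / exp 1 - \<epsilon>) * OPT V C f B \<le> Min ((\<lambda>c. f c (T \<union> S)) ` C)
               \<and> card (T \<union> S) \<le> B}"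
  have k2': "2 \<le> k" using k2 by (simp add: k_def)
  have Kl0: "0 < Kl" unfolding Kl_def using k2' by simp
  have Bp: "real B' = 36 * Kl / \<epsilon>^2" using B'def by (simp add: Kl_def k_def)
  have Bp0: "0 < real B'" using Bp Kl0 e0 by simp
  have lencs: "length cs = k" using distinct_card[OF dist] setcs by (simp add: k_def)
  have pre: "T \<subseteq> V \<and> card T \<le> length cs * B'
     \<and> (\<forall>c\<in>set cs. \<forall>v\<in>V. real B' * marg (f c) {v} T \<le> f c T)"
    unfolding T_def by (rule preprocess_props) (use ms selA setcs in auto)
  have TV: "T \<subseteq> V" using pre by blast
  have margT: "\<forall>c\<in>C. \<forall>v\<in>V. real B' * marg (f c) {v} T \<le> f c T" using pre setcs by blast
  have cardT: "real (card T) \<le> \<epsilon> * real B / 3"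
  proof -
    have "card T \<le> k * B'" using pre lencs by simp
    then have "real (card T) \<le> real (k * B')" by (simp only: of_nat_le_iff)
    then have "real (card T) \<le> real k * real B'" by simp
    also have "\<dots> = 36 * real k * Kl / \<epsilon>^2" using Bp by simp
    also have "\<dots> = \<epsilon> / 3 * (108 * real k / \<epsilon> ^ 3 * Kl)"
    proof -
      have "\<epsilon> ^ 3 = \<epsilon> * \<epsilon>^2" by (simp add: power3_eq_cube power2_eq_square)
      then show ?thesis using e0 by simp
    qed
    also have "\<dots> \<le> \<epsilon> / 3 * real B" unfolding Kl_def k_def by (rule mult_left_mono) (use Bbig e0 in auto)
    finally show ?thesis by simp
  qed
  have cTB: "card T < B"
  proof -
    have "\<epsilon> * real B / 3 < real B" using e1 B0 by simp
    then show ?thesis using cardT by linarith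
  qed
  have b1: "1 \<le> b" using cTB by (simp add: b_def)
  have breal: "real b = real B - real (card T)" using cTB by (simp add: b_def of_nat_diff)
  have bB: "b \<le> B" by (simp add: b_def)
  have OP: "0 \<le> Ov \<and> (\<exists>S. S \<subseteq> V \<and> card S \<le> B \<and> Min ((\<lambda>c. f c S) ` C) = Ov)"
    unfolding Ov_def by (rule OPT_props[OF V Cfin Cne ms])
  have Ov0: "0 \<le> Ov" using OP by blast
  obtain Sst where Sst: "Sst \<subseteq> V" "card Sst \<le> B" "Min ((\<lambda>c. f c Sst) ` C) = Ov" using OP by blast
  have SstO: "\<forall>c\<in>C. Ov \<le> f c Sst"
  proof
    fix c assume c: "c \<in> C"
    have "Min ((\<lambda>c. f c Sst) ` C) \<le> f c Sst" by (rule Min_le) (use Cfin c in auto)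
    then show "Ov \<le> f c Sst" using Sst(3) by simp
  qed
  have \<tau>O: "\<tau> \<le> Ov"
  proof -
    have "0 < 1 / exp (1::real)" by simp
    then have "1 - 1 / exp 1 - \<epsilon> \<le> 1" using e0 by linarith
    then show ?thesis unfolding \<tau>_def using mult_right_mono[OF _ Ov0, of "1 - 1 / exp 1 - \<epsilon>" 1] by simp
  qed
  have gdef: "\<And>c A. g c A = f c (A \<union> T)" unfolding g_def T_def by simp
  have Ctdef: "Ct = {c\<in>C. f c T < Ov}" unfolding Ct_def T_def Ov_def by simp
  have outside: "\<forall>c\<in>C - Ct. \<tau> \<le> f c T" using \<tau>O Ctdef by auto
  show ?thesis
  proof (cases "Ct = {}")
    case True
    have "{} \<in> Ev"
    proof -
      have "\<forall>c\<in>C. \<tau> \<le> f c T" using outside True by simp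
      then have "\<tau> \<le> Min ((\<lambda>c. f c (T \<union> {})) ` C)" using Cfin Cne by simp
      then show ?thesis unfolding Ev_def \<tau>_def Ov_def using cTB by simp
    qed
    then show ?thesis using True d0 unfolding Ev_def by simp
  next
    case False
    define M where "M = Ov / real B'"
    define a where "a = real b / real B * Ov"
    define Bad where "Bad = {S. Min ((\<lambda>c. g c S) ` Ct) < \<tau>}"
    have Ctfin: "finite Ct" using Cfin by (simp add: Ctdef)
    have CtC: "Ct \<subseteq> C" by (auto simp: Ctdef)
    have OvP: "0 < Ov"
    proof -
      obtain c where c: "c \<in> Ct" using False by blast
      then have "f c T < Ov" "c \<in> C" by (auto simp: Ctdef)
      moreover have "0 \<le> f c T" using ms_nonneg[OF _ TV] ms \<open>c \<in> C\<close> by blast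
      ultimately show ?thesis by linarith
    qed
    have M0: "0 < M" using OvP Bp0 by (simp add: M_def)
    have lp: "\<forall>S\<subseteq>V. lp_optimal V g Ct b S (sol S)" using solA False unfolding b_def by blast
    have sol: "\<forall>S\<subseteq>V. sol S \<in> prob_simplex V" using lp unfolding lp_optimal_def by blast
    have gms: "\<forall>c\<in>C. mono_submod V (g c)"
    proof
      fix c assume "c \<in> C"
      then have "mono_submod V (\<lambda>A. f c (A \<union> T))" using g_ms[OF _ TV] ms by blast
      moreover have "g c = (\<lambda>A. f c (A \<union> T))" using gdef by blast
      ultimately show "mono_submod V (g c)" by simp
    qed
    have Sne: "Sst \<noteq> {}"
    proof
      assume "Sst = {}"
      obtain c where c: "c \<in> Ct" using False by blast
      then have "f c T < Ov" "c \<in> C" by (auto simp: Ctdef)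
      moreover have "Ov \<le> f c {}" using SstO \<open>Sst = {}\<close> \<open>c \<in> C\<close> by auto
      moreover have "f c {} \<le> f c T" using ms_mono[OF _ _ TV] ms \<open>c \<in> C\<close> by blast
      ultimately show False by linarith
    qed
    have per: "measure_pmf.prob (alg2_run V sol b) {S. g c S < \<tau>} \<le> exp (- (2 * Kl))" if c: "c \<in> Ct" for c
    proof -
      have cC: "c \<in> C" and fcT: "f c T < Ov" using c by (auto simp: Ctdef)
      have fms: "mono_submod V (f c)" using ms cC by blast
      have h0: "0 \<le> g c {}" using ms_nonneg[OF fms TV] gdef by simp
      have hM: "\<forall>S\<subseteq>V. \<forall>v\<in>V. 0 \<le> g c (insert v S) - g c S \<and> g c (insert v S) - g c S \<le> M"
      proof (intro allI impI ballI)
        fix S v assume S: "S \<subseteq> V" and v: "v \<in> V"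
        have eq: "g c (insert v S) - g c S = marg (f c) {v} (S \<union> T)"
          unfolding gdef marg_def by (simp add: insert_commute)
        have "0 \<le> marg (f c) {v} (S \<union> T)" using marg_nonneg[OF fms _ v] S TV by simp
        moreover have "marg (f c) {v} (S \<union> T) \<le> marg (f c) {v} T"
          using marg_anti[OF fms _ _ v, of T "S \<union> T"] S TV by simp
        moreover have "real B' * marg (f c) {v} T \<le> f c T" using margT cC v by blast
        then have "marg (f c) {v} T \<le> Ov / real B'" using fcT Bp0 by (simp add: field_simps)
        ultimately show "0 \<le> g c (insert v S) - g c S \<and> g c (insert v S) - g c S \<le> M"
          unfolding eq M_def by linarith
      qed
      have drift: "\<forall>S\<subseteq>V. a \<le> real b * (\<Sum>v\<in>V. sol S v * (g c (insert v S) - g c S)) + g c S"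
      proof (intro allI impI)
        fix S assume S: "S \<subseteq> V"
        have "real b / real B * Ov \<le> real b * (\<Sum>v\<in>V. sol S v * marg (g c) {v} S) + g c S"
        proof (rule drift_lemma[OF V Ctfin False _ Sst(1) Sne Sst(2) bB _ Ov0 S _ c])
          show "\<forall>c\<in>Ct. mono_submod V (g c)" using gms CtC by blast
          show "\<forall>c\<in>Ct. Ov \<le> g c Sst"
          proof
            fix d assume d: "d \<in> Ct"
            then have "d \<in> C" using CtC by blast
            then have "f d Sst \<le> f d (Sst \<union> T)" using ms_mono[of V "f d" Sst "Sst \<union> T"] ms Sst TV by blast
            then show "Ov \<le> g d Sst" using SstO \<open>d \<in> C\<close> gdef by fastforce
          qed
          show "lp_optimal V g Ct b S (sol S)" using lp S by blast
        qed
        moreover have "marg (g c) {v} S = g c (insert v S) - g c S" for v unfolding marg_def by simp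
        ultimately show "a \<le> real b * (\<Sum>v\<in>V. sol S v * (g c (insert v S) - g c S)) + g c S"
          unfolding a_def by simp
      qed
      have a0: "0 \<le> a" unfolding a_def using Ov0 by simp
      have "measure_pmf.prob (alg2_run V sol b) {S. g c S < \<tau>}
          \<le> exp ((\<epsilon> / 2 / M) * (exp (- (1 / (1 + \<epsilon> / 2))) * a - a + \<tau>))"
        by (rule color_bound[OF V sol h0 hM M0 drift b1 _ a0]) (use e0 in simp)
      also have "\<dots> \<le> exp (- (2 * Kl))"
      proof -
        have aa: "(1 - \<epsilon> / 3) * Ov \<le> a"
        proof -
          have "1 - \<epsilon> / 3 \<le> real b / real B" using breal cardT B0 by (simp add: field_simps)
          then show ?thesis unfolding a_def using Ov0 by (intro mult_right_mono) auto
        qed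
        show ?thesis unfolding M_def
          using numeric[OF e0 e1 Kl0 OvP Bp aa \<tau>_def] by simp
      qed
      finally show ?thesis .
    qed
    have ek: "exp (- (2 * Kl)) = 1 / (real k)^2"
    proof -
      have "exp (2 * Kl) = exp (Kl + Kl)" by simp
      also have "\<dots> = real k * real k" unfolding exp_add Kl_def using k2' by simp
      finally show ?thesis by (simp add: exp_minus power2_eq_square divide_inverse)
    qed
    have runbad: "measure_pmf.prob (alg2_run V sol b) Bad \<le> 1 / 2"
    proof -
      have BU: "Bad = (\<Union>c\<in>Ct. {S. g c S < \<tau>})"
        unfolding Bad_def using Ctfin False by (auto simp: Min_less_iff)
      have "measure_pmf.prob (alg2_run V sol b) Bad \<le> (\<Sum>c\<in>Ct. measure_pmf.prob (alg2_run V sol b) {S. g c S < \<tau>})"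
        unfolding BU by (rule measure_pmf.finite_measure_subadditive_finite) (use Ctfin in auto)
      also have "\<dots> \<le> (\<Sum>c\<in>Ct. 1 / (real k)^2)" using per ek by (intro sum_mono) auto
      also have "\<dots> = real (card Ct) / (real k)^2" by simp
      also have "\<dots> \<le> real k / (real k)^2"
      proof -
        have "card Ct \<le> k" unfolding k_def using CtC Cfin by (rule card_mono[rotated])
        then show ?thesis by (intro divide_right_mono) auto
      qed
      also have "\<dots> = 1 / real k" using k2' by (simp add: power2_eq_square)
      also have "\<dots> \<le> 1 / 2" using k2' by (simp add: field_simps)
      finally show ?thesis .
    qed
    have repbad: "measure_pmf.prob (alg2 V g Ct b \<delta> sol) Bad \<le> \<delta>"
    proof -
      have "measure_pmf.prob (alg2 V g Ct b \<delta> sol) Bad \<le> (1/2) ^ nat \<lceil>log 2 (2 / \<delta>)\<rceil>"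
        unfolding alg2_def Bad_def by (rule rep_bad[OF V sol]) (use runbad in \<open>simp add: Bad_def\<close>)
      also have "\<dots> \<le> \<delta>" by (rule half_pow_le[OF d0 d1])
      finally show ?thesis .
    qed
    define P where "P = alg2 V g Ct b \<delta> sol"
    have sub: "(UNIV - Bad) \<inter> set_pmf P \<subseteq> Ev"
    proof
      fix S assume S: "S \<in> (UNIV - Bad) \<inter> set_pmf P"
      have SV: "S \<subseteq> V" and cS: "card S \<le> b"
        using rep_support[OF V sol] S unfolding P_def alg2_def by blast+
      have good: "\<forall>c\<in>Ct. \<tau> \<le> g c S" using S Ctfin False by (auto simp: Bad_def Min_less_iff not_less)
      have allc: "\<forall>c\<in>C. \<tau> \<le> f c (T \<union> S)"
      proof
        fix c assume c: "c \<in> C"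
        show "\<tau> \<le> f c (T \<union> S)"
        proof (cases "c \<in> Ct")
          case True
          then show ?thesis using good gdef by (simp add: Un_commute)
        next
          case False
          then have "\<tau> \<le> f c T" using outside c by blast
          moreover have "f c T \<le> f c (T \<union> S)" using ms_mono[of V "f c" T "T \<union> S"] ms c TV SV by simp
          ultimately show ?thesis by linarith
        qed
      qed
      have "\<tau> \<le> Min ((\<lambda>c. f c (T \<union> S)) ` C)" using allc Cfin Cne by simp
      moreover have "card (T \<union> S) \<le> B"
      proof -
        have "card (T \<union> S) \<le> card T + card S" by (rule card_Un_le)
        then show ?thesis using cS cTB unfolding b_def by linarith
      qed
      ultimately show "S \<in> Ev" unfolding Ev_def \<tau>_def Ov_def by simp
    qed
    have "1 - \<delta> \<le> 1 - measure_pmf.prob P Bad" using repbad unfolding P_def by simp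
    also have "\<dots> = measure_pmf.prob P (UNIV - Bad)"
      using measure_pmf.prob_compl[of Bad P] by simp
    also have "\<dots> = measure_pmf.prob P ((UNIV - Bad) \<inter> set_pmf P)" by (simp add: measure_Int_set_pmf)
    also have "\<dots> \<le> measure_pmf.prob P Ev" using sub by (intro measure_pmf.finite_measure_mono) auto
    finally show ?thesis using False unfolding P_def Ev_def b_def by simp
  qed
qed

end
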